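(* Let $G$ be a graph of order $n$ with at least one edge. Then $\gamma^{DLD}(G)=n-1$ if and only if $G$ is a threshold graph.
   Context: All graphs are finite, simple and undirected (not necessarily connected). For $u\in V$, $N(u)$ is the set of neighbours of $u$ and $N[u]=N(u)\cup\{u\}$. A code is a non-empty subset $C\subseteq V$; $I(C;u)=N[u]\cap C$. A code $C$ is solid-locating-dominating if $I(C;u)\ne\emptyset$ for every $u\in V\setminus C$ and $I(C;u)\not\subseteq I(C;v)$ for all distinct $u,v\in V\setminus C$; $\gamma^{DLD}(G)$ is the minimum size of such a code. A threshold graph is a graph that can be built from the empty graph by repeatedly adding either an isolated vertex or a vertex adjacent to all existing vertices; equivalently, a graph in which for every two vertices $x,y$ we have $N(x)\subseteq N[y]$ or $N(y)\subseteq N[x]$. *)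

theory Defs
  imports Main
begin

definition simple_graph :: "'a set \<Rightarrow> ('a \<Rightarrow> 'a \<Rightarrow> bool) \<Rightarrow> bool" where
  "simple_graph V E \<longleftrightarrow> finite V \<and> (\<forall>x y. E x y \<longrightarrow> E y x)
     \<and> (\<forall>x. \<not> E x x) \<and> (\<forall>x y. E x y \<longrightarrow> x \<in> V \<and> y \<in> V)"

definition open_nbhd :: "'a set \<Rightarrow> ('a \<Rightarrow> 'a \<Rightarrow> bool) \<Rightarrow> 'a \<Rightarrow> 'a set" where
  "open_nbhd V E u = {v \<in> V. E u v}"

definition closed_nbhd :: "'a set \<Rightarrow> ('a \<Rightarrow> 'a \<Rightarrow> bool) \<Rightarrow> 'a \<Rightarrow> 'a set" where
  "closed_nbhd V E u = insert u (open_nbhd V E u)"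

definition I_set :: "'a set \<Rightarrow> ('a \<Rightarrow> 'a \<Rightarrow> bool) \<Rightarrow> 'a set \<Rightarrow> 'a \<Rightarrow> 'a set" where
  "I_set V E C u = closed_nbhd V E u \<inter> C"

definition is_DLD_code :: "'a set \<Rightarrow> ('a \<Rightarrow> 'a \<Rightarrow> bool) \<Rightarrow> 'a set \<Rightarrow> bool" where
  "is_DLD_code V E C \<longleftrightarrow> C \<noteq> {} \<and> C \<subseteq> V
     \<and> (\<forall>u \<in> V - C. I_set V E C u \<noteq> {})
     \<and> (\<forall>u \<in> V - C. \<forall>v \<in> V - C. u \<noteq> v \<longrightarrow> \<not> (I_set V E C u \<subseteq> I_set V E C v))"

definition gamma_DLD :: "'a set \<Rightarrow> ('a \<Rightarrow> 'a \<Rightarrow> bool) \<Rightarrow> nat" where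
  "gamma_DLD V E = Min {card C | C. is_DLD_code V E C}"

inductive threshold :: "'a set \<Rightarrow> ('a \<Rightarrow> 'a \<Rightarrow> bool) \<Rightarrow> bool" where
  empty: "threshold {} (\<lambda>_ _. False)"
| add_isolated: "threshold V E \<Longrightarrow> v \<notin> V \<Longrightarrow> threshold (insert v V) E"
| add_dominating: "threshold V E \<Longrightarrow> v \<notin> V \<Longrightarrow>
    threshold (insert v V) (\<lambda>x y. E x y \<or> (x = v \<and> y \<in> V) \<or> (y = v \<and> x \<in> V))"

end

theory Submission
  imports Defs
begin

definition nested :: "'a set \<Rightarrow> ('a \<Rightarrow> 'a \<Rightarrow> bool) \<Rightarrow> bool" where
  "nested V E \<longleftrightarrow> (\<forall>u\<in>V. \<forall>v\<in>V. u \<noteq> v \<longrightarrow>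
     (\<forall>w. E u w \<longrightarrow> w = v \<or> E v w) \<or> (\<forall>w. E v w \<longrightarrow> w = u \<or> E u w))"

lemma threshold_edges: "threshold V E \<Longrightarrow> E x y \<Longrightarrow> x \<in> V \<and> y \<in> V"
  by (induction arbitrary: x y rule: threshold.induct) auto

lemma threshold_nested: "threshold V E \<Longrightarrow> nested V E"
proof (induction rule: threshold.induct)
  case empty
  then show ?case by (simp add: nested_def)
next
  case (add_isolated V E v)
  then show ?case using threshold_edges[OF add_isolated(1)]
    unfolding nested_def by (metis insert_iff)
next
  case (add_dominating V E v)
  then show ?case using threshold_edges[OF add_dominating(1)]
    unfolding nested_def by (auto; metis)
qed

lemma nested_threshold:
  "finite V \<Longrightarrow> simple_graph V E \<Longrightarrow> nested V E \<Longrightarrow> threshold V E"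
proof (induction "card V" arbitrary: V E rule: less_induct)
  case less
  show ?case
  proof (cases "V = {}")
    case True
    then have "E = (\<lambda>_ _. False)" using less(3) unfolding simple_graph_def by blast
    then show ?thesis using True threshold.empty by simp
  next
    case False
    define d where "d = (\<lambda>x. card {y\<in>V. E x y})"
    obtain u where uV: "u \<in> V" and umax: "\<forall>x\<in>V. d x \<le> d u"
    proof -
      have "Max (d ` V) \<in> d ` V" using Max_in[of "d ` V"] False less(2) by blast
      then obtain u where "u \<in> V" "d u = Max (d ` V)" by auto
      moreover have "\<forall>x\<in>V. d x \<le> Max (d ` V)" using less(2) by auto
      ultimately show ?thesis using that by auto
    qed
    have sg: "finite V" "\<forall>x y. E x y \<longrightarrow> E y x" "\<forall>x. \<not> E x x" "\<forall>x y. E x y \<longrightarrow> x \<in> V \<and> y \<in> V"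
      using less(3) unfolding simple_graph_def by auto
    have key: "\<exists>v\<in>V. (\<forall>y. \<not> E v y) \<or> (\<forall>y\<in>V. y \<noteq> v \<longrightarrow> E v y)"
    proof (cases "\<forall>y\<in>V. y \<noteq> u \<longrightarrow> E u y")
      case True
      then show ?thesis using uV by blast
    next
      case False
      then obtain w where w: "w \<in> V" "w \<noteq> u" "\<not> E u w" by blast
      have "\<forall>y. \<not> E w y"
      proof (intro allI notI)
        fix x assume wx: "E w x"
        have xV: "x \<in> V" using sg wx by blast
        have xu: "x \<noteq> u" using wx w sg by metis
        from less(4) xV uV xu have
          "(\<forall>z. E x z \<longrightarrow> z = u \<or> E u z) \<or> (\<forall>z. E u z \<longrightarrow> z = x \<or> E x z)"
          unfolding nested_def by blast
        then show False
        proof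
          assume "\<forall>z. E x z \<longrightarrow> z = u \<or> E u z"
          then show False using wx w sg by metis
        next
          assume h: "\<forall>z. E u z \<longrightarrow> z = x \<or> E x z"
          have ux: "E u x"
          proof -
            from less(4) w(1) uV w(2) have
              "(\<forall>z. E w z \<longrightarrow> z = u \<or> E u z) \<or> (\<forall>z. E u z \<longrightarrow> z = w \<or> E w z)"
              unfolding nested_def by blast
            then show ?thesis
            proof
              assume "\<forall>z. E w z \<longrightarrow> z = u \<or> E u z" then show ?thesis using wx xu by blast
            next
              assume h2: "\<forall>z. E u z \<longrightarrow> z = w \<or> E w z"
              have s: "{y\<in>V. E u y} \<subseteq> {y\<in>V. E w y}" using h2 w(3) by blast
              have "d w \<le> d u" using umax w by blast
              moreover have "finite {y\<in>V. E w y}" using sg(1) by simp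
              ultimately have "{y\<in>V. E u y} = {y\<in>V. E w y}"
                using s card_subset_eq card_mono unfolding d_def by (metis le_antisym)
              then show ?thesis using wx xV by blast
            qed
          qed
          define A where "A = {y\<in>V. E u y}"
          have fA: "finite A" unfolding A_def using sg(1) by simp
          have xA: "x \<in> A" unfolding A_def using ux xV by blast
          have "insert w (insert u (A - {x})) \<subseteq> {y\<in>V. E x y}"
            unfolding A_def using h w uV sg wx ux by blast
          then have c: "card (insert w (insert u (A - {x}))) \<le> d x"
            unfolding d_def using sg(1) by (simp add: card_mono)
          have wA: "w \<notin> insert u (A - {x})" using w unfolding A_def by blast
          have uA: "u \<notin> A - {x}" using sg unfolding A_def by blast
          have "card (insert w (insert u (A - {x}))) = card A + 1"
          proof -
            have p: "card A > 0" using fA xA card_gt_0_iff by blast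
            have "card (insert w (insert u (A - {x}))) = card (A - {x}) + 2"
              using wA uA fA by simp
            also have "\<dots> = card A + 1" using p fA xA by simp
            finally show ?thesis .
          qed
          then have "d u + 1 \<le> d x" using c unfolding d_def A_def by simp
          then show False using umax xV by fastforce
        qed
      qed
      then show ?thesis using w by blast
    qed
    then obtain v where vV: "v \<in> V" and vp: "(\<forall>y. \<not> E v y) \<or> (\<forall>y\<in>V. y \<noteq> v \<longrightarrow> E v y)" by blast
    define V' where "V' = V - {v}"
    have cV: "card V' < card V" unfolding V'_def using card_Diff1_less[OF sg(1) vV] .
    have fV: "finite V'" unfolding V'_def using sg(1) by simp
    have V: "V = insert v V'" "v \<notin> V'" unfolding V'_def using vV by auto
    from vp show ?thesis
    proof
      assume iso: "\<forall>y. \<not> E v y"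
      have "simple_graph V' E" using sg iso fV unfolding simple_graph_def V'_def by blast
      moreover have "nested V' E" using less(4) unfolding nested_def V'_def by blast
      ultimately have "threshold V' E" using less(1) cV fV by blast
      then show ?thesis using V threshold.add_isolated by metis
    next
      assume dom: "\<forall>y\<in>V. y \<noteq> v \<longrightarrow> E v y"
      define E' where "E' = (\<lambda>x y. E x y \<and> x \<noteq> v \<and> y \<noteq> v)"
      have "simple_graph V' E'" using sg fV unfolding simple_graph_def V'_def E'_def by blast
      moreover have "nested V' E'" using less(4) unfolding nested_def V'_def E'_def by blast
      ultimately have "threshold V' E'" using less(1) cV fV by blast
      then have t: "threshold (insert v V') (\<lambda>x y. E' x y \<or> (x = v \<and> y \<in> V') \<or> (y = v \<and> x \<in> V'))"
        by (rule threshold.add_dominating[OF _ V(2)])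
      have "(\<lambda>x y. E' x y \<or> (x = v \<and> y \<in> V') \<or> (y = v \<and> x \<in> V')) = E"
        unfolding E'_def V'_def using dom sg by (intro ext) blast
      then show ?thesis using t V by simp
    qed
  qed
qed

lemma sg_props:
  assumes "simple_graph V E"
  shows "finite V" "\<forall>x y. E x y \<longrightarrow> E y x" "\<forall>x. \<not> E x x" "\<forall>x y. E x y \<longrightarrow> x \<in> V \<and> y \<in> V"
  using assms unfolding simple_graph_def by blast+

lemma I_set_mem: "y \<in> I_set V E C u \<longleftrightarrow> y \<in> C \<and> (y = u \<or> (y \<in> V \<and> E u y))"
  unfolding I_set_def closed_nbhd_def open_nbhd_def by blast

lemma code_V_minus:
  assumes "simple_graph V E" "E x y"
  shows "is_DLD_code V E (V - {x})"
proof -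
  note sg = sg_props[OF assms(1)]
  have yx: "y \<noteq> x" using sg(3) assms(2) by metis
  have yV: "y \<in> V" "x \<in> V" using sg(4) assms(2) by blast+
  have "y \<in> I_set V E (V - {x}) x" unfolding I_set_mem using yx yV assms(2) by blast
  then have ne: "I_set V E (V - {x}) x \<noteq> {}" by blast
  have VC: "V - (V - {x}) = {x}" using yV by blast
  have "V - {x} \<noteq> {}" using yV yx by blast
  then show ?thesis unfolding is_DLD_code_def VC using ne by simp
qed

lemma two_elems:
  assumes "finite A" "card A \<ge> 2"
  obtains u v where "u \<in> A" "v \<in> A" "u \<noteq> v"
proof -
  have "A \<noteq> {}" using assms by auto
  then obtain u where u: "u \<in> A" by blast
  have c: "card (A - {u}) \<ge> 1" using assms u by simp
  have "A - {u} \<noteq> {}"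
  proof
    assume h: "A - {u} = {}" show False using c unfolding h card.empty by simp
  qed
  then obtain v where "v \<in> A - {u}" by blast
  then show ?thesis using that u by blast
qed

theorem mainTheorem7:
  fixes V :: "'a set" and E :: "'a \<Rightarrow> 'a \<Rightarrow> bool"
  assumes "simple_graph V E"
    and "\<exists>x y. E x y"
  shows "gamma_DLD V E = card V - 1 \<longleftrightarrow> threshold V E"
proof -
  note sg = sg_props[OF assms(1)]
  obtain x y where xy: "E x y" using assms(2) by blast
  have xV: "x \<in> V" using sg(4) xy by blast
  define S where "S = {card C | C. is_DLD_code V E C}"
  have finS: "finite S"
  proof -
    have "S \<subseteq> {0..card V}"
    proof
      fix s assume "s \<in> S"
      then obtain C where "is_DLD_code V E C" "s = card C" unfolding S_def by blast
      then have "C \<subseteq> V" "s = card C" unfolding is_DLD_code_def by blast+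
      then show "s \<in> {0..card V}" using card_mono[OF sg(1)] by simp
    qed
    then show ?thesis using finite_subset by blast
  qed
  have c1: "card (V - {x}) \<in> S" unfolding S_def using code_V_minus[OF assms(1) xy] by blast
  have cx: "card (V - {x}) = card V - 1" using xV sg(1) by simp
  have g: "gamma_DLD V E = Min S" unfolding gamma_DLD_def S_def by simp
  have le: "Min S \<le> card V - 1" using Min_le[OF finS c1] cx by simp
  have "gamma_DLD V E = card V - 1 \<longleftrightarrow> nested V E"
  proof
    assume gm: "gamma_DLD V E = card V - 1"
    show "nested V E"
    proof (rule ccontr)
      assume "\<not> nested V E"
      then obtain u v a b where uv: "u \<in> V" "v \<in> V" "u \<noteq> v"
        and a: "E u a" "a \<noteq> v" "\<not> E v a" and b: "E v b" "b \<noteq> u" "\<not> E u b"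
        unfolding nested_def by blast
      define C where "C = V - {u, v}"
      have aV: "a \<in> V" using sg(4) a(1) by blast
      have au: "a \<noteq> u" using sg(3) a(1) by metis
      have bV: "b \<in> V" using sg(4) b(1) by blast
      have bv: "b \<noteq> v" using sg(3) b(1) by metis
      have aC: "a \<in> C" unfolding C_def using aV au a(2) by blast
      have bC: "b \<in> C" unfolding C_def using bV bv b(2) by blast
      have VC: "V - C = {u, v}" unfolding C_def using uv by blast
      have au1: "a \<in> I_set V E C u" unfolding I_set_mem using aC aV a(1) by blast
      have av1: "a \<notin> I_set V E C v" unfolding I_set_mem using a(2,3) by blast
      have bv1: "b \<in> I_set V E C v" unfolding I_set_mem using bC bV b(1) by blast
      have bu1: "b \<notin> I_set V E C u" unfolding I_set_mem using b(2,3) by blast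
      have code: "is_DLD_code V E C"
        unfolding is_DLD_code_def
      proof (intro conjI ballI impI)
        show "C \<noteq> {}" using aC by blast
        show "C \<subseteq> V" unfolding C_def by blast
      next
        fix w assume "w \<in> V - C"
        then have "w = u \<or> w = v" using VC by blast
        then show "I_set V E C w \<noteq> {}" using au1 bv1 by blast
      next
        fix w z assume "w \<in> V - C" "z \<in> V - C" "w \<noteq> z"
        then have "w \<in> {u,v}" "z \<in> {u,v}" "w \<noteq> z" using VC by simp_all
        then have "(w = u \<and> z = v) \<or> (w = v \<and> z = u)" by auto
        then show "\<not> I_set V E C w \<subseteq> I_set V E C z"
          using au1 av1 bv1 bu1 by blast
      qed
      then have "card C \<in> S" unfolding S_def by blast
      moreover have "card C = card V - 2" unfolding C_def using uv sg(1) by simp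
      moreover have "card {u,v} \<le> card V"
        using uv card_mono[OF sg(1), of "{u,v}"] by simp
      then have "card V \<ge> 2" using uv by simp
      ultimately have "Min S < card V - 1" using Min_le[OF finS] by fastforce
      then show False using gm g by simp
    qed
  next
    assume n: "nested V E"
    have "\<forall>s\<in>S. card V - 1 \<le> s"
    proof
      fix s assume "s \<in> S"
      then obtain C where C: "is_DLD_code V E C" "s = card C" unfolding S_def by blast
      have CV: "C \<subseteq> V" using C(1) unfolding is_DLD_code_def by blast
      have fC: "finite C" using CV sg(1) finite_subset by blast
      show "card V - 1 \<le> s"
      proof (rule ccontr)
        assume "\<not> card V - 1 \<le> s"
        moreover have "card (V - C) = card V - card C" using card_Diff_subset[OF fC CV] .
        ultimately have "card (V - C) \<ge> 2" using C(2) by linarith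
        then obtain u v where uv: "u \<in> V - C" "v \<in> V - C" "u \<noteq> v"
          using two_elems[of "V - C"] sg(1) by blast
        have D: "\<forall>u\<in>V-C. \<forall>v\<in>V-C. u \<noteq> v \<longrightarrow> \<not> I_set V E C u \<subseteq> I_set V E C v"
          using C(1) by (simp add: is_DLD_code_def)
        have i1: "\<not> I_set V E C u \<subseteq> I_set V E C v" using D[rule_format, OF uv(1,2,3)] .
        have i2: "\<not> I_set V E C v \<subseteq> I_set V E C u" using D[rule_format, OF uv(2,1)] uv(3) by blast
        from i1 obtain a where a0: "a \<in> I_set V E C u" "a \<notin> I_set V E C v" unfolding subset_iff by blast
        have aC: "a \<in> C" using a0(1) unfolding I_set_mem by blast
        have aV: "a \<in> V" using aC CV by blast
        have a: "a \<in> C" "a = u \<or> E u a" "a \<noteq> v" "\<not> E v a"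
          using a0 aC aV unfolding I_set_mem by blast+
        from i2 obtain b where b0: "b \<in> I_set V E C v" "b \<notin> I_set V E C u" unfolding subset_iff by blast
        have bC: "b \<in> C" using b0(1) unfolding I_set_mem by blast
        have bV: "b \<in> V" using bC CV by blast
        have b: "b \<in> C" "b = v \<or> E v b" "b \<noteq> u" "\<not> E u b"
          using b0 bC bV unfolding I_set_mem by blast+
        have "E u a" using a uv by blast
        moreover have "E v b" using b uv by blast
        moreover have "u \<in> V" "v \<in> V" using uv by blast+
        ultimately show False using n uv(3) a(3,4) b(3,4) unfolding nested_def by blast
      qed
    qed
    then have "card V - 1 \<le> Min S" using finS c1 by (intro Min.boundedI) auto
    then show "gamma_DLD V E = card V - 1" using le g by simp
  qed
  also have "\<dots> \<longleftrightarrow> threshold V E"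
    using threshold_nested nested_threshold[OF sg(1) assms(1)] by blast
  finally show ?thesis .
qed

end
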